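(* Let $\mathcal{T}$ be a single-elimination tournament with at least $2$ players and $N$ total brackets, let $R$ be a uniformly random bracket, and let $q_{\mathrm{pair}}=\min_{a,b\in P(\mathcal{T}),\,a\ne b}\Pr[R(x_{a,b})\in\{a,b\}]$. If $\sigma$ is a scoring system with distinct subset sums, then $\mathrm{res}(\mathcal{T},\sigma)=(1-q_{\mathrm{pair}})N+1$.
   Context: A single-elimination tournament is a finite directed graph $\mathcal{T}$ such that: (a) $\mathcal{T}$ has exactly one sink (vertex with no out-neighbours); (b) every non-sink vertex has exactly one out-neighbour; (c) $\mathcal{T}$ has no directed cycles; (d) $|N^-(v)|\ne 1$ for every vertex $v$, where $N^-(v)$ denotes the set of in-neighbours of $v$. The players $P(\mathcal{T})$ are the sources and the matches are $M(\mathcal{T})=V(\mathcal{T})\setminus P(\mathcal{T})$. For a vertex $u$, $P(u)$ is the set of players $a$ for which there is a directed walk from $a$ to $u$ (length $0$ allowed). For distinct players $a,b$, $x_{a,b}$ denotes the unique match $x$ having in-neighbours $u_a,u_b\in N^-(x)$ with $P(u_a)\cap\{a,b\}=\{a\}$ and $P(u_b)\cap\{a,b\}=\{b\}$ (such a match exists and is unique). A bracket is a function $B:V(\mathcal{T})\to P(\mathcal{T})$ with $B(a)=a$ for every player $a$ and $B(x)\in\{B(u):u\in N^-(x)\}$ for every match $x$. A scoring system is any function $\sigma:M(\mathcal{T})\to\mathbb{R}_{>0}$; it has distinct subset sums if for any two sets of matches $M,M'$, $\sum_{x\in M}\sigma(x)=\sum_{x\in M'}\sigma(x)$ implies $M=M'$.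 For brackets $B,B'$ let $\mathrm{score}_\sigma(B,B')=\sum_{x\in M(\mathcal{T}):\,B(x)=B'(x)}\sigma(x)$. A set of brackets $\mathcal{B}$ is $\sigma$-resolving if for every pair of distinct brackets $B\ne B'$ there is $B_i\in\mathcal{B}$ with $\mathrm{score}_\sigma(B_i,B)\ne\mathrm{score}_\sigma(B_i,B')$. $\mathrm{res}(\mathcal{T},\sigma)$ is the minimum $r$ such that every set of $r$ brackets is $\sigma$-resolving. *)

theory Defs
  imports Complex_Main
begin

definition in_nbrs :: "('v \<times> 'v) set \<Rightarrow> 'v \<Rightarrow> 'v set" where
  "in_nbrs E v = {u. (u, v) \<in> E}"

definition is_sink :: "('v \<times> 'v) set \<Rightarrow> 'v \<Rightarrow> bool" where
  "is_sink E v \<longleftrightarrow> (\<forall>w. (v, w) \<notin> E)"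

definition single_elim :: "'v set \<Rightarrow> ('v \<times> 'v) set \<Rightarrow> bool" where
  "single_elim V E \<longleftrightarrow>
     finite V \<and> E \<subseteq> V \<times> V
     \<and> (\<exists>!s. s \<in> V \<and> is_sink E s)
     \<and> (\<forall>v\<in>V. \<not> is_sink E v \<longrightarrow> (\<exists>!w. (v, w) \<in> E))
     \<and> acyclic E
     \<and> (\<forall>v\<in>V. card (in_nbrs E v) \<noteq> 1)"

definition players :: "'v set \<Rightarrow> ('v \<times> 'v) set \<Rightarrow> 'v set" where
  "players V E = {v \<in> V. in_nbrs E v = {}}"

definition matches :: "'v set \<Rightarrow> ('v \<times> 'v) set \<Rightarrow> 'v set" where
  "matches V E = V - players V E"

definition playersTo :: "'v set \<Rightarrow> ('v \<times> 'v) set \<Rightarrow> 'v \<Rightarrow> 'v set" where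
  "playersTo V E u = {a \<in> players V E. (a, u) \<in> E\<^sup>*}"

definition meet :: "'v set \<Rightarrow> ('v \<times> 'v) set \<Rightarrow> 'v \<Rightarrow> 'v \<Rightarrow> 'v" where
  "meet V E a b = (THE x. x \<in> matches V E \<and>
      (\<exists>ua ub. ua \<in> in_nbrs E x \<and> ub \<in> in_nbrs E x \<and>
         playersTo V E ua \<inter> {a, b} = {a} \<and> playersTo V E ub \<inter> {a, b} = {b}))"

text \<open>Brackets: functions V \<rightarrow> players, taken extensional (undefined outside V)
  so that the set of brackets is finite.\<close>
definition brackets :: "'v set \<Rightarrow> ('v \<times> 'v) set \<Rightarrow> ('v \<Rightarrow> 'v) set" where
  "brackets V E = {B. (\<forall>a \<in> players V E. B a = a)
      \<and> (\<forall>x \<in> matches V E. B x \<in> B ` in_nbrs E x)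
      \<and> (\<forall>v. v \<notin> V \<longrightarrow> B v = undefined)}"

definition distinct_subset_sums :: "'v set \<Rightarrow> ('v \<times> 'v) set \<Rightarrow> ('v \<Rightarrow> real) \<Rightarrow> bool" where
  "distinct_subset_sums V E \<sigma> \<longleftrightarrow>
     (\<forall>M M'. M \<subseteq> matches V E \<longrightarrow> M' \<subseteq> matches V E \<longrightarrow>
        sum \<sigma> M = sum \<sigma> M' \<longrightarrow> M = M')"

definition scoring_system :: "'v set \<Rightarrow> ('v \<times> 'v) set \<Rightarrow> ('v \<Rightarrow> real) \<Rightarrow> bool" where
  "scoring_system V E \<sigma> \<longleftrightarrow> (\<forall>x \<in> matches V E. \<sigma> x > 0)"

definition score :: "'v set \<Rightarrow> ('v \<times> 'v) set \<Rightarrow> ('v \<Rightarrow> real) \<Rightarrow> ('v \<Rightarrow> 'v) \<Rightarrow> ('v \<Rightarrow> 'v) \<Rightarrow> real" where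
  "score V E \<sigma> B B' = (\<Sum>x \<in> {x \<in> matches V E. B x = B' x}. \<sigma> x)"

definition resolving :: "'v set \<Rightarrow> ('v \<times> 'v) set \<Rightarrow> ('v \<Rightarrow> real) \<Rightarrow> ('v \<Rightarrow> 'v) set \<Rightarrow> bool" where
  "resolving V E \<sigma> \<B> \<longleftrightarrow>
     (\<forall>B \<in> brackets V E. \<forall>B' \<in> brackets V E. B \<noteq> B' \<longrightarrow>
        (\<exists>Bi \<in> \<B>. score V E \<sigma> Bi B \<noteq> score V E \<sigma> Bi B'))"

definition res :: "'v set \<Rightarrow> ('v \<times> 'v) set \<Rightarrow> ('v \<Rightarrow> real) \<Rightarrow> nat" where
  "res V E \<sigma> = (LEAST r. \<forall>\<B>. \<B> \<subseteq> brackets V E \<longrightarrow> card \<B> = r \<longrightarrow> resolving V E \<sigma> \<B>)"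

definition prob_meet :: "'v set \<Rightarrow> ('v \<times> 'v) set \<Rightarrow> 'v \<Rightarrow> 'v \<Rightarrow> real" where
  "prob_meet V E a b =
     real (card {B \<in> brackets V E. B (meet V E a b) \<in> {a, b}}) / real (card (brackets V E))"

definition q_pair :: "'v set \<Rightarrow> ('v \<times> 'v) set \<Rightarrow> real" where
  "q_pair V E = Min {prob_meet V E a b | a b. a \<in> players V E \<and> b \<in> players V E \<and> a \<noteq> b}"

end

theory Submission
  imports Defs "HOL-Library.FuncSet"
begin


locale se =
  fixes V :: "'v set" and E :: "('v \<times> 'v) set"
  assumes se: "single_elim V E"
begin

abbreviation "PL \<equiv> players V E"
abbreviation "MM \<equiv> matches V E"
abbreviation "BR \<equiv> brackets V E"
abbreviation "P \<equiv> playersTo V E"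

lemma finV: "finite V" using se by (simp add: single_elim_def)
lemma EV: "E \<subseteq> V \<times> V" using se by (simp add: single_elim_def)
lemma acyc: "acyclic E" using se by (simp add: single_elim_def)
lemma EV1: "(u,v) \<in> E \<Longrightarrow> u \<in> V" using EV by auto
lemma EV2: "(u,v) \<in> E \<Longrightarrow> v \<in> V" using EV by auto

lemma func: "(v,w) \<in> E \<Longrightarrow> (v,w') \<in> E \<Longrightarrow> w = w'"
proof -
  assume a: "(v,w) \<in> E" "(v,w') \<in> E"
  have "v \<in> V" using a EV1 by auto
  moreover have "\<not> is_sink E v" using a by (auto simp: is_sink_def)
  ultimately have "\<exists>!w. (v,w) \<in> E" using se by (auto simp: single_elim_def)
  thus ?thesis using a by auto
qed

lemma finE: "finite E" using EV finV finite_subset by blast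
lemma wfE: "wf E" using finE acyc finite_acyclic_wf by blast
lemma wfE': "wf (E\<inverse>)" using finE acyc finite_acyclic_wf_converse by blast

lemma player_iff: "a \<in> PL \<longleftrightarrow> a \<in> V \<and> (\<forall>u. (u,a) \<notin> E)"
  by (auto simp: players_def in_nbrs_def)
lemma match_iff: "x \<in> MM \<longleftrightarrow> x \<in> V \<and> (\<exists>u. (u,x) \<in> E)"
  by (auto simp: matches_def players_def in_nbrs_def)

lemma rt_player: "a \<in> PL \<Longrightarrow> (y,a) \<in> E\<^sup>* \<Longrightarrow> y = a"
  by (metis player_iff rtranclE)

lemma P_player: "a \<in> PL \<Longrightarrow> P a = {a}"
  using rt_player by (auto simp: playersTo_def)

lemma P_mono: "(x,y) \<in> E\<^sup>* \<Longrightarrow> P x \<subseteq> P y"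
  by (auto simp: playersTo_def)

lemma P_sub: "P v \<subseteq> PL" by (auto simp: playersTo_def)

lemma P_match: "x \<in> MM \<Longrightarrow> P x = (\<Union>u\<in>{u. (u,x) \<in> E}. P u)"
proof
  assume x: "x \<in> MM"
  show "P x \<subseteq> (\<Union>u\<in>{u. (u,x) \<in> E}. P u)"
  proof
    fix a assume a: "a \<in> P x"
    hence ap: "a \<in> PL" "(a,x) \<in> E\<^sup>*" by (auto simp: playersTo_def)
    have "a \<noteq> x" using ap x by (auto simp: player_iff match_iff)
    then obtain w where "(a,w) \<in> E\<^sup>*" "(w,x) \<in> E" using ap(2) by (metis rtranclE)
    thus "a \<in> (\<Union>u\<in>{u. (u,x) \<in> E}. P u)" using ap by (auto simp: playersTo_def)
  qed
  show "(\<Union>u\<in>{u. (u,x) \<in> E}. P u) \<subseteq> P x"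
    using P_mono by blast
qed

lemma chain: "(a,u) \<in> E\<^sup>* \<Longrightarrow> (a,u') \<in> E\<^sup>* \<Longrightarrow> (u,u') \<in> E\<^sup>* \<or> (u',u) \<in> E\<^sup>*"
proof (induction rule: rtrancl_induct)
  case base
  then show ?case by simp
next
  case (step y z)
  from step.IH[OF step.prems] show ?case
  proof
    assume "(y,u') \<in> E\<^sup>*"
    then show ?thesis
    proof (cases rule: converse_rtranclE)
      case base
      then show ?thesis using step.hyps by auto
    next
      case (step w)
      then have "w = z" using func \<open>(y,z) \<in> E\<close> by blast
      then show ?thesis using step by auto
    qed
  next
    assume "(u',y) \<in> E\<^sup>*"
    then show ?thesis using step.hyps by (meson rtrancl.rtrancl_into_rtrancl)
  qed
qed

lemma nocyc: "(u,w) \<in> E\<^sup>* \<Longrightarrow> (w,u) \<in> E \<Longrightarrow> False"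
  using acyc by (meson acyclic_def rtrancl_into_trancl1)

lemma disj_aux: "(u,x) \<in> E \<Longrightarrow> (u',x) \<in> E \<Longrightarrow> (u,u') \<in> E\<^sup>* \<Longrightarrow> u = u'"
proof (rule ccontr)
  assume a: "(u,x) \<in> E" "(u',x) \<in> E" "(u,u') \<in> E\<^sup>*" "u \<noteq> u'"
  then obtain w where "(u,w) \<in> E" "(w,u') \<in> E\<^sup>*" by (metis converse_rtranclE)
  then have "(x,u') \<in> E\<^sup>*" using func a(1) by blast
  thus False using a(2) nocyc by blast
qed

lemma disj: "(u,x) \<in> E \<Longrightarrow> (u',x) \<in> E \<Longrightarrow> a \<in> P u \<Longrightarrow> a \<in> P u' \<Longrightarrow> u = u'"
proof -
  assume a: "(u,x) \<in> E" "(u',x) \<in> E" "a \<in> P u" "a \<in> P u'"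
  then have "(a,u) \<in> E\<^sup>*" "(a,u') \<in> E\<^sup>*" by (auto simp: playersTo_def)
  then have "(u,u') \<in> E\<^sup>* \<or> (u',u) \<in> E\<^sup>*" using chain by blast
  thus ?thesis using disj_aux a by metis
qed

lemma nonempty: "v \<in> V \<Longrightarrow> P v \<noteq> {}"
proof (induction v rule: wf_induct_rule[OF wfE])
  case (1 v)
  show ?case
  proof (cases "v \<in> PL")
    case True then show ?thesis using P_player by auto
  next
    case False
    then obtain u where u: "(u,v) \<in> E" using 1 player_iff by blast
    then have "P u \<noteq> {}" using 1 EV1 by blast
    thus ?thesis using P_mono u by blast
  qed
qed

lemma brD1: "B \<in> BR \<Longrightarrow> a \<in> PL \<Longrightarrow> B a = a" by (auto simp: brackets_def)
lemma brD2: "B \<in> BR \<Longrightarrow> x \<in> MM \<Longrightarrow> \<exists>u. (u,x) \<in> E \<and> B x = B u"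
  by (auto simp: brackets_def in_nbrs_def)
lemma brD3: "B \<in> BR \<Longrightarrow> v \<notin> V \<Longrightarrow> B v = undefined" by (auto simp: brackets_def)

lemma br_P: "B \<in> BR \<Longrightarrow> v \<in> V \<Longrightarrow> B v \<in> P v"
proof (induction v rule: wf_induct_rule[OF wfE])
  case (1 v)
  show ?case
  proof (cases "v \<in> PL")
    case True then show ?thesis using P_player brD1 1 by auto
  next
    case False
    then have "v \<in> MM" using 1 by (simp add: matches_def)
    then obtain u where u: "(u,v) \<in> E" "B v = B u" using brD2 1 by blast
    then have "B u \<in> P u" using 1 EV1 by blast
    thus ?thesis using P_mono u by auto
  qed
qed

lemma br_PL: "B \<in> BR \<Longrightarrow> v \<in> V \<Longrightarrow> B v \<in> PL" using br_P P_sub by blast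

lemma br_down: "(x,y) \<in> E\<^sup>* \<Longrightarrow> B \<in> BR \<Longrightarrow> B y = a \<Longrightarrow> a \<in> P x \<Longrightarrow> B x = a"
proof (induction arbitrary: a rule: rtrancl_induct)
  case base then show ?case by simp
next
  case (step y z)
  have "z \<in> MM" using step.hyps(2) EV2 match_iff by blast
  then obtain u where u: "(u,z) \<in> E" "B z = B u" using brD2 step.prems by blast
  have "a \<in> P u" using br_P[of B u] u step.prems EV1 by auto
  moreover have "a \<in> P y" using P_mono step.hyps(1) step.prems by blast
  ultimately have "u = y" using disj u step.hyps(2) by blast
  thus ?case using step u by auto
qed

lemma finite_BR: "finite BR"
proof -
  have "BR \<subseteq> PiE V (\<lambda>_. PL)"
    using br_PL brD3 by (auto simp: PiE_iff extensional_def)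
  moreover have "finite PL" using finV by (simp add: players_def)
  ultimately show ?thesis using finV finite_PiE finite_subset by (metis (no_types, lifting))
qed

end


context se begin

definition mprop :: "'v \<Rightarrow> 'v \<Rightarrow> 'v \<Rightarrow> bool" where
  "mprop a b x \<longleftrightarrow> x \<in> MM \<and>
      (\<exists>ua ub. ua \<in> in_nbrs E x \<and> ub \<in> in_nbrs E x \<and>
         P ua \<inter> {a, b} = {a} \<and> P ub \<inter> {a, b} = {b})"

lemma mprop_P: "mprop a b x \<Longrightarrow> a \<in> P x \<and> b \<in> P x"
  unfolding mprop_def in_nbrs_def using P_mono by blast

lemma mprop_le: "a \<noteq> b \<Longrightarrow> mprop a b x \<Longrightarrow> mprop a b x' \<Longrightarrow> (x,x') \<in> E\<^sup>* \<Longrightarrow> x = x'"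
proof (rule ccontr)
  assume m: "mprop a b x" "mprop a b x'" and r: "(x,x') \<in> E\<^sup>*" and ne: "x \<noteq> x'" and abne: "a \<noteq> b"
  obtain w where w: "(x,w) \<in> E\<^sup>*" "(w,x') \<in> E" using r ne by (metis rtranclE)
  have ab: "a \<in> P w" "b \<in> P w" using mprop_P[OF m(1)] P_mono[OF w(1)] by auto
  obtain ua where ua: "(ua,x') \<in> E" "P ua \<inter> {a,b} = {a}" using m(2)
    by (auto simp: mprop_def in_nbrs_def)
  have "a \<in> P ua" using ua by auto
  then have "ua = w" using disj ua(1) w(2) ab by blast
  then show False using ua ab abne by auto
qed

lemma mprop_unique: "a \<noteq> b \<Longrightarrow> mprop a b x \<Longrightarrow> mprop a b x' \<Longrightarrow> x = x'"
proof -
  assume ne: "a \<noteq> b" and m: "mprop a b x" "mprop a b x'"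
  have "(a,x) \<in> E\<^sup>*" "(a,x') \<in> E\<^sup>*" using mprop_P[OF m(1)] mprop_P[OF m(2)]
    by (auto simp: playersTo_def)
  then have "(x,x') \<in> E\<^sup>* \<or> (x',x) \<in> E\<^sup>*" using chain by blast
  thus ?thesis using mprop_le m ne by metis
qed

lemma meet_eq: "a \<noteq> b \<Longrightarrow> mprop a b x \<Longrightarrow> meet V E a b = x"
proof -
  assume ne: "a \<noteq> b" and m: "mprop a b x"
  have "meet V E a b = (THE x. mprop a b x)" unfolding meet_def mprop_def by simp
  also have "\<dots> = x" using m mprop_unique[OF ne] by (intro the_equality) auto
  finally show ?thesis .
qed

lemma sink_reach: "\<exists>s. \<forall>v\<in>V. (v,s) \<in> E\<^sup>*"
proof -
  obtain s where s: "s \<in> V" "is_sink E s" "\<And>t. t \<in> V \<Longrightarrow> is_sink E t \<Longrightarrow> t = s"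
    using se by (auto simp: single_elim_def)
  have "v \<in> V \<longrightarrow> (v,s) \<in> E\<^sup>*" for v
  proof (induction v rule: wf_induct_rule[OF wfE'])
    case (1 v)
    show ?case
    proof
      assume v: "v \<in> V"
      show "(v,s) \<in> E\<^sup>*"
      proof (cases "is_sink E v")
        case True then show ?thesis using s v by auto
      next
        case False
        then obtain w where w: "(v,w) \<in> E" by (auto simp: is_sink_def)
        then have "(w,s) \<in> E\<^sup>*" using 1 EV2 by blast
        thus ?thesis using w by auto
      qed
    qed
  qed
  thus ?thesis by blast
qed

lemma mprop_exists: "a \<in> PL \<Longrightarrow> b \<in> PL \<Longrightarrow> a \<noteq> b \<Longrightarrow> \<exists>x. mprop a b x"
proof -
  assume ab: "a \<in> PL" "b \<in> PL" "a \<noteq> b"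
  obtain s where s: "\<forall>v\<in>V. (v,s) \<in> E\<^sup>*" using sink_reach by blast
  let ?Y = "{y \<in> V. a \<in> P y \<and> b \<in> P y}"
  have "a \<in> V" using ab by (simp add: players_def)
  then have as: "(a,s) \<in> E\<^sup>*" using s by blast
  have sV: "s \<in> V"
  proof (cases "a = s")
    case True then show ?thesis using \<open>a \<in> V\<close> by simp
  next
    case False then obtain w where "(w,s) \<in> E" using as by (metis rtranclE)
    then show ?thesis using EV2 by blast
  qed
  have "b \<in> V" using ab by (simp add: players_def)
  then have bs: "(b,s) \<in> E\<^sup>*" using s by blast
  have "s \<in> ?Y" using as bs ab sV by (simp add: playersTo_def)
  then obtain x where x: "x \<in> ?Y" "\<And>y. (y,x) \<in> E \<Longrightarrow> y \<notin> ?Y"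
    using wfE_min[OF wfE \<open>s \<in> ?Y\<close>] by blast
  have xm: "x \<in> MM"
  proof (rule ccontr)
    assume "x \<notin> MM"
    then have "x \<in> PL" using x by (simp add: matches_def)
    then show False using x ab P_player by auto
  qed
  have ax: "a \<in> P x" "b \<in> P x" using x(1) by auto
  obtain ua where ua: "(ua,x) \<in> E" "a \<in> P ua" using P_match[OF xm] ax(1) by blast
  obtain ub where ub: "(ub,x) \<in> E" "b \<in> P ub" using P_match[OF xm] ax(2) by blast
  have "ua \<notin> ?Y" using x(2)[OF ua(1)] .
  then have "b \<notin> P ua" using ua EV1 by blast
  have "ub \<notin> ?Y" using x(2)[OF ub(1)] .
  then have "a \<notin> P ub" using ub EV1 by blast
  have "P ua \<inter> {a,b} = {a}" "P ub \<inter> {a,b} = {b}"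
    using \<open>b \<notin> P ua\<close> \<open>a \<notin> P ub\<close> ua ub by auto
  then show ?thesis using xm ua(1) ub(1) unfolding mprop_def in_nbrs_def by blast
qed

lemma construct:
  fixes f :: "'v \<Rightarrow> nat"
  assumes inj: "inj_on f PL"
  shows "\<exists>B\<in>BR. \<forall>v\<in>V. B v \<in> P v \<and> (\<forall>q\<in>P v. f q \<le> f (B v))"
proof -
  define B where "B v = (if v \<in> V then inv_into PL f (Max (f ` P v)) else undefined)" for v
  have finP: "finite (P v)" for v
    using finV finite_subset P_sub by (metis (no_types, lifting) mem_Collect_eq players_def subsetI)
  have key: "B v \<in> P v \<and> (\<forall>q\<in>P v. f q \<le> f (B v))" if v: "v \<in> V" for v
  proof -
    have "Max (f ` P v) \<in> f ` P v" using finP nonempty v by simp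
    then obtain p where p: "p \<in> P v" "Max (f ` P v) = f p" by auto
    have "p \<in> PL" using p P_sub by blast
    then have "inv_into PL f (f p) = p" by (rule inv_into_f_f[OF inj])
    then have "B v = p" unfolding B_def using v p by simp
    moreover have "\<forall>q\<in>P v. f q \<le> f p" using p finP by (metis Max_ge finite_imageI image_eqI)
    ultimately show ?thesis using p by auto
  qed
  have "B \<in> BR"
    unfolding brackets_def
  proof (intro CollectI conjI ballI allI impI)
    fix a assume a: "a \<in> PL"
    then show "B a = a" using key[of a] P_player by (auto simp: players_def)
  next
    fix x assume x: "x \<in> MM"
    then have xV: "x \<in> V" by (simp add: matches_def)
    have "B x \<in> P x" using key xV by blast
    then obtain u where u: "(u,x) \<in> E" "B x \<in> P u" using P_match[OF x] by auto
    have uV: "u \<in> V" using u EV1 by blast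
    have "f (B x) \<le> f (B u)" using key[OF uV] u by blast
    moreover have "f (B u) \<le> f (B x)" using key[OF uV] key[OF xV] P_mono u(1) by blast
    ultimately have "B u = B x" using inj key[OF uV] u(2) P_sub
      by (meson antisym inj_onD subsetD)
    then show "B x \<in> B ` in_nbrs E x" using u unfolding in_nbrs_def by (metis (mono_tags, lifting) image_eqI mem_Collect_eq)
  next
    fix v assume "v \<notin> V" then show "B v = undefined" by (simp add: B_def)
  qed
  thus ?thesis using key by blast
qed

lemma exists_ab:
  assumes "a \<in> PL" "b \<in> PL" "a \<noteq> b"
  shows "\<exists>B\<in>BR. \<forall>v\<in>V. (a \<in> P v \<longrightarrow> B v = a) \<and> (a \<notin> P v \<and> b \<in> P v \<longrightarrow> B v = b)"
proof -
  have finPL: "finite PL" using finV by (simp add: players_def)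
  obtain g :: "'v \<Rightarrow> nat" where g: "inj_on g PL"
    using finite_imp_inj_to_nat_seg[OF finPL] by blast
  define M where "M = Max (g ` PL)"
  have gM: "q \<in> PL \<Longrightarrow> g q \<le> M" for q using finPL M_def by simp
  define f where "f p = (if p = a then M+2 else if p = b then M+1 else g p)" for p
  have "inj_on f PL"
    unfolding inj_on_def
  proof (intro ballI impI)
    fix x y assume xy: "x \<in> PL" "y \<in> PL" "f x = f y"
    show "x = y"
    proof (cases "x = a \<or> x = b \<or> y = a \<or> y = b")
      case True then show ?thesis using xy gM[of x] gM[of y] unfolding f_def by (auto split: if_splits)
    next
      case False then show ?thesis using xy g unfolding f_def by (auto simp: inj_on_def)
    qed
  qed
  then obtain B where B: "B \<in> BR" "\<And>v. v \<in> V \<Longrightarrow> B v \<in> P v \<and> (\<forall>q\<in>P v. f q \<le> f (B v))"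
    using construct by blast
  have "\<forall>v\<in>V. (a \<in> P v \<longrightarrow> B v = a) \<and> (a \<notin> P v \<and> b \<in> P v \<longrightarrow> B v = b)"
  proof (intro ballI conjI impI)
    fix v assume v: "v \<in> V" "a \<in> P v"
    then have "f a \<le> f (B v)" using B by blast
    moreover have "B v \<in> PL" using B v P_sub by blast
    ultimately show "B v = a" using gM[of "B v"] unfolding f_def by (auto split: if_splits)
  next
    fix v assume v: "v \<in> V" "a \<notin> P v \<and> b \<in> P v"
    then have "f b \<le> f (B v)" "B v \<noteq> a" using B by auto
    moreover have "B v \<in> PL" using B v P_sub by blast
    ultimately show "B v = b" using gM[of "B v"] assms unfolding f_def by (auto split: if_splits)
  qed
  thus ?thesis using B by blast
qed

end


context se begin

lemma lower:
  assumes ab: "a \<in> PL" "b \<in> PL" "a \<noteq> b"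
  shows "\<exists>B\<in>BR. \<exists>B'\<in>BR. B \<noteq> B' \<and> (\<forall>Bi\<in>BR. Bi (meet V E a b) \<notin> {a,b} \<longrightarrow>
            {y \<in> MM. Bi y = B y} = {y \<in> MM. Bi y = B' y})"
proof -
  obtain x where mx: "mprop a b x" using mprop_exists ab by blast
  have mx': "meet V E a b = x" using meet_eq ab(3) mx .
  have xm: "x \<in> MM" using mx by (simp add: mprop_def)
  have xV: "x \<in> V" using xm by (simp add: matches_def)
  have abx: "a \<in> P x" "b \<in> P x" using mprop_P[OF mx] by auto
  obtain ub where ub: "(ub,x) \<in> E" "P ub \<inter> {a,b} = {b}" using mx
    by (auto simp: mprop_def in_nbrs_def)
  have ubV: "ub \<in> V" using ub EV1 by blast
  obtain B where B: "B \<in> BR" "\<And>v. v \<in> V \<Longrightarrow> (a \<in> P v \<longrightarrow> B v = a) \<and> (a \<notin> P v \<and> b \<in> P v \<longrightarrow> B v = b)"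
    using exists_ab[OF ab] by blast
  have Bx: "B x = a" using B xV abx by blast
  have Bub: "B ub = b" using B(2)[OF ubV] ub(2) ab(3) by blast
  define B' where "B' v = (if (x,v) \<in> E\<^sup>* \<and> B v = a then b else B v)" for v
  have B'ub: "B' ub = b" using Bub B'_def ab(3) by simp
  have "B' \<in> BR"
    unfolding brackets_def
  proof (intro CollectI conjI ballI allI impI)
    fix p assume p: "p \<in> PL"
    have "(x,p) \<notin> E\<^sup>*" using rt_player[OF p] p xm by (auto simp: player_iff match_iff)
    then show "B' p = p" using B'_def brD1[OF B(1) p] by simp
  next
    fix v assume v: "v \<notin> V"
    have "(x,v) \<notin> E\<^sup>*"
    proof
      assume "(x,v) \<in> E\<^sup>*"
      then show False using v xV by (metis EV2 rtranclE)
    qed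
    then show "B' v = undefined" using B'_def brD3[OF B(1) v] by simp
  next
    fix v assume vm: "v \<in> MM"
    obtain u where u: "(u,v) \<in> E" "B v = B u" using brD2[OF B(1) vm] by blast
    have "\<exists>w. (w,v) \<in> E \<and> B' w = B' v"
    proof (cases "(x,v) \<in> E\<^sup>* \<and> B v = a")
      case True
      then have B'v: "B' v = b" using B'_def by simp
      show ?thesis
      proof (cases "v = x")
        case True then show ?thesis using ub(1) B'ub B'v by (intro exI[of _ ub]) simp
      next
        case False
        then obtain w where w: "(x,w) \<in> E\<^sup>*" "(w,v) \<in> E" using \<open>(x,v) \<in> E\<^sup>* \<and> B v = a\<close>
          by (metis rtranclE)
        have "a \<in> P u" using br_P[OF B(1), of u] u True EV1 by auto
        moreover have "a \<in> P w" using P_mono[OF w(1)] abx by blast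
        ultimately have "u = w" using disj u(1) w(2) by blast
        then have "B w = a" using u True by simp
        then have "B' w = b" using w(1) B'_def by simp
        then show ?thesis using w(2) B'v by (intro exI[of _ w]) simp
      qed
    next
      case False
      then have B'v: "B' v = B v" unfolding B'_def by (rule if_not_P)
      have "\<not> ((x,u) \<in> E\<^sup>* \<and> B u = a)"
      proof
        assume "(x,u) \<in> E\<^sup>* \<and> B u = a"
        then have "(x,v) \<in> E\<^sup>* \<and> B v = a" using u by auto
        then show False using False by simp
      qed
      then have "B' u = B u" unfolding B'_def by (rule if_not_P)
      then show ?thesis using u B'v by (intro exI[of _ u]) simp
    qed
    then obtain w where "(w,v) \<in> E" "B' w = B' v" by blast
    then show "B' v \<in> B' ` in_nbrs E v" unfolding in_nbrs_def
      by (metis (mono_tags, lifting) image_eqI mem_Collect_eq)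
  qed
  moreover have "B \<noteq> B'"
  proof
    assume "B = B'"
    then have "B x = B' x" by simp
    then show False using Bx B'_def ab(3) by simp
  qed
  moreover have "\<forall>Bi\<in>BR. Bi x \<notin> {a,b} \<longrightarrow> {y \<in> MM. Bi y = B y} = {y \<in> MM. Bi y = B' y}"
  proof (intro ballI impI)
    fix Bi assume Bi: "Bi \<in> BR" "Bi x \<notin> {a,b}"
    have "Bi y = B y \<longleftrightarrow> Bi y = B' y" if y: "y \<in> MM" for y
    proof (cases "(x,y) \<in> E\<^sup>* \<and> B y = a")
      case True
      have "Bi y \<noteq> a" using br_down[of x y Bi a] True Bi abx by auto
      moreover have "Bi y \<noteq> b" using br_down[of x y Bi b] True Bi abx by auto
      ultimately show ?thesis using True B'_def by simp
    next
      case False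
      then have "B' y = B y" unfolding B'_def by (rule if_not_P)
      then show ?thesis by simp
    qed
    then show "{y \<in> MM. Bi y = B y} = {y \<in> MM. Bi y = B' y}" by blast
  qed
  ultimately show ?thesis using B(1) mx' by blast
qed

lemma upper:
  assumes B: "B \<in> BR" "B' \<in> BR" "B \<noteq> B'"
  shows "\<exists>a b. a \<in> PL \<and> b \<in> PL \<and> a \<noteq> b \<and> (\<forall>Bi\<in>BR. Bi (meet V E a b) \<in> {a,b} \<longrightarrow>
            {y \<in> MM. Bi y = B y} \<noteq> {y \<in> MM. Bi y = B' y})"
proof -
  let ?D = "{x \<in> V. B x \<noteq> B' x}"
  obtain v where v: "B v \<noteq> B' v" using B(3) by blast
  have "v \<in> V"
  proof (rule ccontr)
    assume "v \<notin> V"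
    then show False using brD3[OF B(1)] brD3[OF B(2)] v by metis
  qed
  then have "v \<in> ?D" using v by blast
  then obtain x where x: "x \<in> ?D" "\<And>y. (y,x) \<in> E \<Longrightarrow> y \<notin> ?D"
    using wfE_min[OF wfE \<open>v \<in> ?D\<close>] by blast
  have xm: "x \<in> MM"
  proof (rule ccontr)
    assume "x \<notin> MM"
    then have "x \<in> PL" using x by (simp add: matches_def)
    then show False using x(1) brD1[OF B(1)] brD1[OF B(2)] by simp
  qed
  have agree: "B w = B' w" if "(w,x) \<in> E" for w
    using x(2)[OF that] that EV1 by blast
  obtain u where u: "(u,x) \<in> E" "B x = B u" using brD2[OF B(1) xm] by blast
  obtain u' where u': "(u',x) \<in> E" "B' x = B' u'" using brD2[OF B(2) xm] by blast
  define a where "a = B u"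
  define b where "b = B u'"
  have Bx: "B x = a" using u a_def by simp
  have B'x: "B' x = b" using u' agree b_def by simp
  have ne: "a \<noteq> b" using Bx B'x x(1) by auto
  have aP: "a \<in> P u" using br_P[OF B(1)] u EV1 a_def by blast
  have bP: "b \<in> P u'" using br_P[OF B(1)] u' EV1 b_def by blast
  have "u \<noteq> u'" using ne a_def b_def by auto
  then have "a \<notin> P u'" using disj[OF u(1) u'(1)] aP by blast
  have "b \<notin> P u" using disj[OF u(1) u'(1)] bP \<open>u \<noteq> u'\<close> by blast
  have "P u \<inter> {a,b} = {a}" "P u' \<inter> {a,b} = {b}" using \<open>a \<notin> P u'\<close> \<open>b \<notin> P u\<close> aP bP by auto
  then have "mprop a b x" using xm u(1) u'(1) unfolding mprop_def in_nbrs_def by blast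
  then have mx: "meet V E a b = x" using meet_eq ne by blast
  have abPL: "a \<in> PL" "b \<in> PL" using aP bP P_sub by blast+
  have "\<forall>Bi\<in>BR. Bi x \<in> {a,b} \<longrightarrow> {y \<in> MM. Bi y = B y} \<noteq> {y \<in> MM. Bi y = B' y}"
  proof (intro ballI impI)
    fix Bi assume "Bi \<in> BR" "Bi x \<in> {a,b}"
    then have "(Bi x = B x) \<noteq> (Bi x = B' x)" using Bx B'x ne by auto
    then have "(x \<in> {y \<in> MM. Bi y = B y}) \<noteq> (x \<in> {y \<in> MM. Bi y = B' y})" using xm by simp
    then show "{y \<in> MM. Bi y = B y} \<noteq> {y \<in> MM. Bi y = B' y}" by metis
  qed
  then have "a \<in> PL \<and> b \<in> PL \<and> a \<noteq> b \<and> (\<forall>Bi\<in>BR. Bi (meet V E a b) \<in> {a,b} \<longrightarrow>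
            {y \<in> MM. Bi y = B y} \<noteq> {y \<in> MM. Bi y = B' y})" using abPL ne mx by simp
  then show ?thesis by blast
qed

end



theorem lemmaA2:
  fixes V :: "'v set" and E :: "('v \<times> 'v) set" and \<sigma> :: "'v \<Rightarrow> real"
  assumes "single_elim V E"
    and "card (players V E) \<ge> 2"
    and "scoring_system V E \<sigma>"
    and "distinct_subset_sums V E \<sigma>"
  shows "real (res V E \<sigma>) = (1 - q_pair V E) * real (card (brackets V E)) + 1"
proof -
  interpret se V E using assms(1) by (rule se.intro)
  define N where "N = card (brackets V E)"
  define cnt where "cnt a b = card {B \<in> brackets V E. B (meet V E a b) \<in> {a,b}}" for a b
  have finBR: "finite (brackets V E)" by (rule finite_BR)
  have finPL: "finite (players V E)" using finV by (simp add: players_def)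
  have pm: "prob_meet V E a b = real (cnt a b) / real N" for a b
    by (simp add: prob_meet_def cnt_def N_def)
  obtain a1 b1 where ab1: "a1 \<in> players V E" "b1 \<in> players V E" "a1 \<noteq> b1"
  proof -
    have "Suc (Suc 0) \<le> card (players V E)" using assms(2) by simp
    then obtain a C where aC: "players V E = insert a C" "a \<notin> C" "Suc 0 \<le> card C"
      unfolding card_le_Suc_iff by blast
    then obtain b where "b \<in> C" by fastforce
    then show ?thesis using that aC by blast
  qed
  define Q where "Q = {prob_meet V E a b | a b. a \<in> players V E \<and> b \<in> players V E \<and> a \<noteq> b}"
  have finQ: "finite Q"
  proof -
    have "Q \<subseteq> (\<lambda>p. prob_meet V E (fst p) (snd p)) ` (players V E \<times> players V E)"
      unfolding Q_def by force
    then show ?thesis using finPL finite_subset by blast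
  qed
  have neQ: "Q \<noteq> {}" using ab1 unfolding Q_def by blast
  have "Min Q \<in> Q" using Min_in[OF finQ neQ] .
  then obtain a0 b0 where ab0: "a0 \<in> players V E" "b0 \<in> players V E" "a0 \<noteq> b0"
    and qmin: "Min Q = prob_meet V E a0 b0" unfolding Q_def by blast
  have qdef: "q_pair V E = Min Q" unfolding q_pair_def Q_def by simp
  have Npos: "N > 0"
  proof -
    obtain B where "B \<in> brackets V E" using exists_ab[OF ab1] by blast
    then show ?thesis using finBR N_def card_gt_0_iff by blast
  qed
  define K where "K = cnt a0 b0"
  have Kmin: "K \<le> cnt a b" if "a \<in> players V E" "b \<in> players V E" "a \<noteq> b" for a b
  proof -
    have "prob_meet V E a b \<in> Q" unfolding Q_def using that by blast
    then have "Min Q \<le> prob_meet V E a b" using Min_le[OF finQ] by blast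
    then have "real K / real N \<le> real (cnt a b) / real N" using qmin pm K_def by simp
    then show ?thesis using Npos by (simp add: divide_le_cancel)
  qed
  define T0 where "T0 = {B \<in> brackets V E. B (meet V E a0 b0) \<in> {a0,b0}}"
  have T0sub: "T0 \<subseteq> brackets V E" unfolding T0_def by blast
  have KN: "K \<le> N" unfolding K_def cnt_def N_def using card_mono[OF finBR T0sub] T0_def by simp
  have scoreq: "score V E \<sigma> Bi B = score V E \<sigma> Bi B' \<longleftrightarrow>
      {y \<in> matches V E. Bi y = B y} = {y \<in> matches V E. Bi y = B' y}" for Bi B B'
  proof
    assume "score V E \<sigma> Bi B = score V E \<sigma> Bi B'"
    then have "sum \<sigma> {y \<in> matches V E. Bi y = B y} = sum \<sigma> {y \<in> matches V E. Bi y = B' y}"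
      by (simp add: score_def)
    moreover have "\<And>M M'. M \<subseteq> matches V E \<Longrightarrow> M' \<subseteq> matches V E \<Longrightarrow> sum \<sigma> M = sum \<sigma> M' \<Longrightarrow> M = M'"
      using assms(4) unfolding distinct_subset_sums_def by blast
    ultimately show "{y \<in> matches V E. Bi y = B y} = {y \<in> matches V E. Bi y = B' y}"
      by (metis (no_types, lifting) mem_Collect_eq subsetI)
  next
    assume "{y \<in> matches V E. Bi y = B y} = {y \<in> matches V E. Bi y = B' y}"
    then show "score V E \<sigma> Bi B = score V E \<sigma> Bi B'" by (simp add: score_def)
  qed
  have resv: "res V E \<sigma> = N - K + 1"
    unfolding res_def
  proof (rule Least_equality)
    show "\<forall>\<B>. \<B> \<subseteq> brackets V E \<longrightarrow> card \<B> = N - K + 1 \<longrightarrow> resolving V E \<sigma> \<B>"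
    proof (intro allI impI)
      fix \<B> assume Bs: "\<B> \<subseteq> brackets V E" and cB: "card \<B> = N - K + 1"
      show "resolving V E \<sigma> \<B>"
        unfolding resolving_def
      proof (intro ballI impI)
        fix B B' assume BB: "B \<in> brackets V E" "B' \<in> brackets V E" "B \<noteq> B'"
        obtain a b where ab: "a \<in> players V E" "b \<in> players V E" "a \<noteq> b"
          and dist: "\<forall>Bi\<in>brackets V E. Bi (meet V E a b) \<in> {a,b} \<longrightarrow>
            {y \<in> matches V E. Bi y = B y} \<noteq> {y \<in> matches V E. Bi y = B' y}"
          using upper[OF BB] by blast
        define T where "T = {Bi \<in> brackets V E. Bi (meet V E a b) \<in> {a,b}}"
        have Tsub: "T \<subseteq> brackets V E" unfolding T_def by blast
        have cT: "K \<le> card T" using Kmin[OF ab] unfolding T_def cnt_def by simp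
        have "\<B> \<inter> T \<noteq> {}"
        proof
          assume "\<B> \<inter> T = {}"
          then have "\<B> \<subseteq> brackets V E - T" using Bs by blast
          then have "card \<B> \<le> card (brackets V E - T)" using finBR by (simp add: card_mono)
          also have "\<dots> = N - card T" using card_Diff_subset[OF finite_subset[OF Tsub finBR] Tsub] N_def by simp
          finally show False using cB cT KN by linarith
        qed
        then obtain Bi where Bi: "Bi \<in> \<B>" "Bi \<in> T" by blast
        then have "{y \<in> matches V E. Bi y = B y} \<noteq> {y \<in> matches V E. Bi y = B' y}"
          using dist T_def by blast
        then have "score V E \<sigma> Bi B \<noteq> score V E \<sigma> Bi B'" using scoreq by blast
        then show "\<exists>Bi\<in>\<B>. score V E \<sigma> Bi B \<noteq> score V E \<sigma> Bi B'" using Bi by blast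
      qed
    qed
  next
    fix r assume H: "\<forall>\<B>. \<B> \<subseteq> brackets V E \<longrightarrow> card \<B> = r \<longrightarrow> resolving V E \<sigma> \<B>"
    show "N - K + 1 \<le> r"
    proof (rule ccontr)
      assume "\<not> N - K + 1 \<le> r"
      then have rle: "r \<le> N - K" by simp
      define S where "S = brackets V E - T0"
      have cS: "card S = N - K"
        using card_Diff_subset[OF finite_subset[OF T0sub finBR] T0sub] N_def K_def cnt_def T0_def S_def
        by simp
      obtain \<B> where Bsub: "\<B> \<subseteq> S" and cB: "card \<B> = r"
        using obtain_subset_with_card_n[of r S] rle cS by metis
      have "\<B> \<subseteq> brackets V E" using Bsub S_def by blast
      then have res: "resolving V E \<sigma> \<B>" using H cB by blast
      obtain B B' where BB: "B \<in> brackets V E" "B' \<in> brackets V E" "B \<noteq> B'"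
        and same: "\<forall>Bi\<in>brackets V E. Bi (meet V E a0 b0) \<notin> {a0,b0} \<longrightarrow>
            {y \<in> matches V E. Bi y = B y} = {y \<in> matches V E. Bi y = B' y}"
        using lower[OF ab0] by blast
      obtain Bi where Bi: "Bi \<in> \<B>" "score V E \<sigma> Bi B \<noteq> score V E \<sigma> Bi B'"
        using res BB unfolding resolving_def by blast
      have "Bi \<in> brackets V E" "Bi (meet V E a0 b0) \<notin> {a0,b0}"
        using Bi(1) Bsub unfolding S_def T0_def by auto
      then have "{y \<in> matches V E. Bi y = B y} = {y \<in> matches V E. Bi y = B' y}"
        using same by blast
      then show False using Bi(2) scoreq by blast
    qed
  qed
  have "q_pair V E = real K / real N" using qdef qmin pm K_def by simp
  then have "(1 - q_pair V E) * real N + 1 = real N - real K + 1"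
    using Npos by (simp add: field_simps)
  also have "\<dots> = real (N - K + 1)" using KN by (simp add: of_nat_diff)
  finally show ?thesis using resv N_def by simp
qed


end
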